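(* In the M/G/1 queue with $(\beta,\alpha)$-bounded size estimates, $$\mathbb{E}[T^{\mathrm{res}}_{\mathrm{SRPT\text{-}B}}]\le\mathbb{E}[T^{\mathrm{res}}_{\mathrm{SRPT\text{-}SE}}]+\min\Big\{1,\max\Big\{1-\frac1\alpha,\frac1\beta-1\Big\}\Big\}\Big(\frac1\rho\ln\frac1{1-\rho}-1\Big)\mathbb{E}[S].$$
   Context: Model (M/G/1 with job size estimates). Jobs arrive to a single preemptive server (rate 1) as a Poisson process of rate $\lambda>0$; each job has a true size and an estimated size, the pairs being i.i.d. copies of $(S,Z)$ with a joint density; $0<\rho=\lambda\mathbb{E}[S]<1$. Estimates are $(\beta,\alpha)$-bounded ($0<\beta\le\alpha$) if $\beta S\le Z\le\alpha S$ a.s. Policies are given by rank functions on job states $(s,z,a)$ ($a$ = age = service received), always serving the least-rank job: SRPT-B: $\min\{|z-a|,z\}$; SRPT-SE: $\frac{z}{s}(s-a)$. The residence time of a job is the time from its first receiving service to its completion; $T^{\mathrm{res}}_\pi$ is the steady-state residence time under $\pi$. Known fact (cited, may be used): with $\rho_Z(x)=\lambda\mathbb{E}[S\mathbf 1(Z\le x)]$ and $w_\pi(s,z,a)=\sup_{b\in[a,s)}r_\pi(s,z,b)$, the expected residence time of a tagged job with $S=s,Z=z$ is $\int_0^s\frac{da}{1-\rho_Z(w_\pi(s,z,a))}$ for these policies and for PSJF-E (rank $z$). *)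

theory Defs
  imports "HOL-Analysis.Analysis"
begin

text \<open>The joint law of (S, Z) is a measure M on real \<times> real (first component: true
size s, second component: estimate z).  Job states are (s, z, a).\<close>

definition rank_SRPT_B :: "real \<Rightarrow> real \<Rightarrow> real \<Rightarrow> real" where
  "rank_SRPT_B s z a = min \<bar>z - a\<bar> z"

definition rank_SRPT_SE :: "real \<Rightarrow> real \<Rightarrow> real \<Rightarrow> real" where
  "rank_SRPT_SE s z a = z / s * (s - a)"

definition rhoZ :: "real \<Rightarrow> (real \<times> real) measure \<Rightarrow> real \<Rightarrow> real" where
  "rhoZ lam M x = lam * (\<integral> p. fst p * indicator {p. snd p \<le> x} p \<partial>M)"

definition worst_rank :: "(real \<Rightarrow> real \<Rightarrow> real \<Rightarrow> real) \<Rightarrow> real \<Rightarrow> real \<Rightarrow> real \<Rightarrow> real" where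
  "worst_rank r s z a = (SUP b \<in> {a..<s}. r s z b)"

text \<open>Expected residence time of a tagged job with S = s, Z = z (cited formula).\<close>
definition cond_res_time ::
  "(real \<Rightarrow> real \<Rightarrow> real \<Rightarrow> real) \<Rightarrow> real \<Rightarrow> (real \<times> real) measure \<Rightarrow> real \<Rightarrow> real \<Rightarrow> ennreal" where
  "cond_res_time r lam M s z =
     (\<integral>\<^sup>+ a \<in> {0..<s}. ennreal (1 / (1 - rhoZ lam M (worst_rank r s z a))) \<partial>lborel)"

definition mean_res_time ::
  "(real \<Rightarrow> real \<Rightarrow> real \<Rightarrow> real) \<Rightarrow> real \<Rightarrow> (real \<times> real) measure \<Rightarrow> ennreal" where
  "mean_res_time r lam M = (\<integral>\<^sup>+ p. cond_res_time r lam M (fst p) (snd p) \<partial>M)"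

end

theory Submission imports Defs begin


lemma wr_SE:
  assumes "0 < s" "a < s" "0 \<le> z"
  shows "worst_rank rank_SRPT_SE s z a = z/s*(s-a)"
  unfolding worst_rank_def rank_SRPT_SE_def
proof (rule cSup_eq_maximum)
  show "z / s * (s - a) \<in> (\<lambda>b. z / s * (s - b)) ` {a..<s}" using assms by auto
  fix x assume "x \<in> (\<lambda>b. z / s * (s - b)) ` {a..<s}"
  then obtain b where b: "a \<le> b" "x = z / s * (s - b)" by auto
  show "x \<le> z / s * (s - a)" using b assms by (simp, intro divide_right_mono mult_left_mono) auto
qed

lemma wr_B_le:
  assumes "a < s" "\<And>b. a \<le> b \<Longrightarrow> b < s \<Longrightarrow> min \<bar>z - b\<bar> z \<le> u"
  shows "worst_rank rank_SRPT_B s z a \<le> u"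
  unfolding worst_rank_def rank_SRPT_B_def
  using assms by (intro cSUP_least) auto

lemma integrable_ind:
  fixes g :: "real \<Rightarrow> real"
  assumes "g \<in> borel_measurable borel" "\<And>x. \<bar>g x\<bar> \<le> B" "a \<le> b"
  shows "integrable lborel (\<lambda>x. indicator {a..<b} x * g x)"
  using integrableI_bounded_set_indicator[of "{a..<b}" lborel g B] assms by simp

lemma integrable_ind':
  fixes g :: "real \<Rightarrow> real"
  assumes "g \<in> borel_measurable borel" "\<And>x. \<bar>g x\<bar> \<le> B" "a \<le> b"
  shows "integrable lborel (\<lambda>x. indicator {a<..<b} x * g x)"
  using integrableI_bounded_set_indicator[of "{a<..<b}" lborel g B] assms by simp

lemma perjob:
  fixes R :: "real \<Rightarrow> real" and s z \<alpha> \<beta> K :: real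
  assumes monoR: "mono R" and R1: "\<And>x. 1 \<le> R x" and RK: "\<And>x. R x \<le> K"
    and R0: "\<And>x. x \<le> 0 \<Longrightarrow> R x = 1"
    and s: "0 < s" and z: "0 < z" and bz: "\<beta> * s \<le> z" and za: "z \<le> \<alpha> * s"
    and bp: "0 < \<beta>" and ba: "\<beta> \<le> \<alpha>"
  shows "(\<integral>\<^sup>+ a\<in>{0..<s}. ennreal (R (worst_rank rank_SRPT_B s z a)) \<partial>lborel)
      \<le> (\<integral>\<^sup>+ a\<in>{0..<s}. ennreal (R (worst_rank rank_SRPT_SE s z a)) \<partial>lborel)
        + ennreal (min 1 (max (1 - 1/\<alpha>) (1/\<beta> - 1)) * (s * (R z - 1)))"
proof -
  have Rm[measurable]: "R \<in> borel_measurable borel" using borel_measurable_mono monoR by blast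
  have Rabs: "\<bar>R x\<bar> \<le> K" for x using R1[of x] RK[of x] by auto
  have Rnn: "0 \<le> R x" for x using R1[of x] by linarith
  have K1: "1 \<le> K" using R1[of 0] RK[of 0] by auto
  have Rle: "x \<le> y \<Longrightarrow> R x \<le> R y" for x y using monoR by (auto simp: mono_def)
  define c where "c = min 1 (max (1 - 1/\<alpha>) (1/\<beta> - 1))"
  have ap: "0 < \<alpha>" using bp ba by auto
  have c0: "0 \<le> c"
  proof (cases "\<beta> \<le> 1")
    case True then have "0 \<le> 1/\<beta> - 1" using bp by (simp add: field_simps)
    then show ?thesis unfolding c_def by auto
  next
    case False then have "1 < \<alpha>" using ba by auto
    then have "0 \<le> 1 - 1/\<alpha>" by (simp add: field_simps)
    then show ?thesis unfolding c_def by auto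
  qed
  define I where "I = (\<integral>x. indicator {0..<z} x * R (z - x) \<partial>lborel)"
  have intI: "integrable lborel (\<lambda>x. indicator {0..<z} x * R (z - x))"
    by (rule integrable_ind[where B=K]) (use Rabs z in auto)
  have I0: "0 \<le> I" unfolding I_def by (rule integral_nonneg_AE) (simp add: Rnn)
  have SE: "(\<integral>\<^sup>+ a\<in>{0..<s}. ennreal (R (worst_rank rank_SRPT_SE s z a)) \<partial>lborel) = ennreal (s/z * I)"
  proof -
    have "(\<integral>\<^sup>+ a\<in>{0..<s}. ennreal (R (worst_rank rank_SRPT_SE s z a)) \<partial>lborel)
       = (\<integral>\<^sup>+ a. ennreal (indicator {0..<s} a * R (z/s*(s-a))) \<partial>lborel)"
      by (rule nn_integral_cong) (use s z in \<open>auto simp: wr_SE split: split_indicator\<close>)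
    also have "\<dots> = ennreal (\<integral>a. indicator {0..<s} a * R (z/s*(s-a)) \<partial>lborel)"
      by (rule nn_integral_eq_integral, rule integrable_ind[where B=K])
         (use Rabs s Rnn in auto)
    also have "(\<integral>a. indicator {0..<s} a * R (z/s*(s-a)) \<partial>lborel) = s/z * I"
    proof -
      have "(\<integral>a. indicator {0..<s} a * R (z/s*(s-a)) \<partial>lborel)
          = \<bar>s/z\<bar> *\<^sub>R (\<integral>x. indicator {0..<s} (0 + s/z*x) * R (z/s*(s-(0 + s/z*x))) \<partial>lborel)"
        using z s by (intro lborel_integral_real_affine) auto
      also have "(\<lambda>x. indicator {0..<s} (0 + s/z*x) * R (z/s*(s-(0 + s/z*x))))
          = (\<lambda>x. indicator {0..<z} x * R (z - x))"
      proof
        fix x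
        have "0 + s/z*x \<in> {0..<s} \<longleftrightarrow> x \<in> {0..<z}" using s z
          by (auto simp: field_simps zero_le_mult_iff)
        moreover have "z/s*(s-(0 + s/z*x)) = z - x" using s z by (simp add: field_simps)
        ultimately show "indicator {0..<s} (0 + s/z*x) * R (z/s*(s-(0 + s/z*x))) = indicator {0..<z} x * R (z - x)"
          by (simp add: indicator_def)
      qed
      finally show ?thesis using s z by (simp add: I_def)
    qed
    finally show ?thesis .
  qed
  have LHS_form: "(\<integral>\<^sup>+ a\<in>{0..<s}. ennreal (R (worst_rank rank_SRPT_B s z a)) \<partial>lborel)
     \<le> ennreal (\<integral>a. G a \<partial>lborel)"
    if Gi: "integrable lborel G" and G0: "\<And>a. 0 \<le> G a"
      and GB: "\<And>a. 0 \<le> a \<Longrightarrow> a < s \<Longrightarrow> R (worst_rank rank_SRPT_B s z a) \<le> G a" for G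
  proof -
    have "(\<integral>\<^sup>+ a\<in>{0..<s}. ennreal (R (worst_rank rank_SRPT_B s z a)) \<partial>lborel)
       \<le> (\<integral>\<^sup>+ a. ennreal (G a) \<partial>lborel)"
      by (rule nn_integral_mono) (auto intro!: ennreal_leI GB simp: G0 split: split_indicator)
    also have "\<dots> = ennreal (\<integral>a. G a \<partial>lborel)"
      by (rule nn_integral_eq_integral) (use Gi G0 in auto)
    finally show ?thesis .
  qed
  have fin: "ennreal L \<le> ennreal (s/z * I) + ennreal (c * (s * (R z - 1)))"
    if "L \<le> s/z * I + c * (s * (R z - 1))" for L
  proof -
    have "0 \<le> c * (s * (R z - 1))" using c0 s R1[of z] by simp
    moreover have "0 \<le> s/z * I" using s z I0 by simp
    ultimately have "ennreal (s/z * I + c * (s * (R z - 1))) = ennreal (s/z * I) + ennreal (c * (s * (R z - 1)))"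
      by (auto intro: ennreal_plus)
    moreover have "ennreal L \<le> ennreal (s/z * I + c * (s * (R z - 1)))" using that by (rule ennreal_leI)
    ultimately show ?thesis by simp
  qed
  have IgeJ: "(\<integral>x. indicator {0..<z} x * R (z - x) \<partial>lborel) \<ge>
     (\<integral>x. indicator {0..<z} x + indicator {0..<z-d} x * (R d - 1) \<partial>lborel)" if "0 \<le> d" "d \<le> z" for d
  proof (rule Bochner_Integration.integral_mono)
    show "integrable lborel (\<lambda>x. indicator {0..<z} x + indicator {0..<z-d} x * (R d - 1))"
      using that by (intro Bochner_Integration.integrable_add) (auto simp: integrable_indicator_iff)
  qed (use intI that R1 in \<open>auto simp: indicator_def intro: Rle\<close>)
  consider (A) "s \<le> z" | (B) "z < s" "s \<le> 2*z" | (C) "2*z < s" by linarith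
  then show ?thesis
  proof cases
    case A
    define J where "J = (\<integral>a. indicator {0..<s} a * R (z - a) \<partial>lborel)"
    have intJ: "integrable lborel (\<lambda>a. indicator {0..<s} a * R (z - a))"
      by (rule integrable_ind[where B=K]) (use Rabs s in auto)
    have L: "(\<integral>\<^sup>+ a\<in>{0..<s}. ennreal (R (worst_rank rank_SRPT_B s z a)) \<partial>lborel) \<le> ennreal J"
      unfolding J_def
    proof (rule LHS_form[OF intJ])
      fix a assume a: "0 \<le> a" "a < s"
      have "worst_rank rank_SRPT_B s z a \<le> z - a"
        by (rule wr_B_le) (use a A in auto)
      then show "R (worst_rank rank_SRPT_B s z a) \<le> indicator {0..<s} a * R (z - a)"
        using a by (simp add: Rle)
    qed (simp add: Rnn)
    have J1: "J + (z - s) \<le> I"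
    proof -
      have "(\<integral>a. indicator {0..<s} a * R (z - a) + indicator {s..<z} a \<partial>lborel) \<le> I"
        unfolding I_def
      proof (rule Bochner_Integration.integral_mono)
        show "integrable lborel (\<lambda>a. indicator {0..<s} a * R (z - a) + indicator {s..<z} a)"
          using A by (intro Bochner_Integration.integrable_add intJ) (auto simp: integrable_indicator_iff)
      qed (use intI A R1 Rnn s in \<open>auto simp: indicator_def\<close>)
      moreover have "(\<integral>a. indicator {0..<s} a * R (z - a) + indicator {s..<z} a \<partial>lborel) = J + (z - s)"
        unfolding J_def using A by (subst Bochner_Integration.integral_add) (auto simp: integrable_indicator_iff intJ)
      ultimately show ?thesis by simp
    qed
    have J2: "J \<le> s * R z"
    proof -
      have "J \<le> (\<integral>a. indicator {0..<s} a * R z \<partial>lborel)"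
        unfolding J_def
      proof (rule Bochner_Integration.integral_mono)
        show "integrable lborel (\<lambda>a. indicator {0..<s} a * R z)" using s by (simp add: integrable_indicator_iff)
      qed (use intJ s in \<open>auto simp: indicator_def Rle\<close>)
      also have "\<dots> = s * R z" using s by simp
      finally show ?thesis .
    qed
    have cA: "1 - s/z \<le> c"
    proof -
      have "1/\<alpha> \<le> s/z" using za z ap s by (simp add: field_simps)
      moreover have "0 \<le> s/z" using s z by simp
      ultimately show ?thesis unfolding c_def by auto
    qed
    have sz: "0 \<le> 1 - s/z" "0 \<le> s/z" using A s z by (auto simp: field_simps)
    have e1: "s/z*(J + (z-s)) \<le> s/z*I" using J1 sz by (intro mult_left_mono) auto
    have e2: "(1-s/z)*J \<le> (1-s/z)*(s*R z)" using J2 sz by (intro mult_left_mono) auto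
    have e3: "(1-s/z)*(s*(R z-1)) \<le> c*(s*(R z-1))" using cA s R1[of z] by (intro mult_right_mono) auto
    have e4: "s/z*(J + (z-s)) + (1-s/z)*(s*(R z-1)) = J - (1-s/z)*J + (1-s/z)*(s*R z)"
      using z by (simp add: field_simps)
    have "J \<le> s/z * I + c * (s * (R z - 1))" using e1 e2 e3 e4 by linarith
    from L fin[OF this] show ?thesis unfolding SE c_def by (rule order_trans)
  next
    case B
    define d where "d = s - z"
    have d: "0 < d" "d \<le> z" "s = z + d" using B by (auto simp: d_def)
    define G where "G = (\<lambda>a. indicator {0..<z} a * R (z - a) + indicator {z..<s} a
        + indicator {z-d<..<s} a * (R d - 1))"
    have intG: "integrable lborel G" unfolding G_def using d R1[of d] RK[of d]
      by (intro Bochner_Integration.integrable_add intI integrable_ind'[where B=K])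
        (auto simp: integrable_indicator_iff intro: order_trans[OF _ K1] abs_triangle_ineq4)
    have L: "(\<integral>\<^sup>+ a\<in>{0..<s}. ennreal (R (worst_rank rank_SRPT_B s z a)) \<partial>lborel)
        \<le> ennreal (\<integral>a. G a \<partial>lborel)"
    proof (rule LHS_form[OF intG])
      fix a assume a: "0 \<le> a" "a < s"
      have "worst_rank rank_SRPT_B s z a \<le> max (z - a) d"
        by (rule wr_B_le) (use a d in auto)
      then have "R (worst_rank rank_SRPT_B s z a) \<le> R (max (z - a) d)" by (rule Rle)
      also have "\<dots> \<le> G a"
      proof (cases "a < z")
        case True
        show ?thesis
        proof (cases "a \<le> z - d")
          case True
          then have "max (z - a) d = z - a" by simp
          then show ?thesis using \<open>a < z\<close> a R1[of d] Rnn[of "z-a"]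
            by (auto simp: G_def indicator_def)
        next
          case False
          then show ?thesis using \<open>a < z\<close> a R1[of d] R1[of "z-a"]
            by (auto simp: G_def indicator_def max_def)
        qed
      next
        case False
        then show ?thesis using a d R1[of d]
          by (auto simp: G_def indicator_def max_def)
      qed
      finally show "R (worst_rank rank_SRPT_B s z a) \<le> G a" .
    next
      fix a show "0 \<le> G a" using Rnn R1[of d] by (auto simp: G_def indicator_def)
    qed
    have intG_val: "(\<integral>a. G a \<partial>lborel) = I + d + (R d - 1) * (2*d)"
      unfolding G_def I_def using d R1[of d] RK[of d]
      by (subst Bochner_Integration.integral_add, (auto simp: integrable_indicator_iff intro!: Bochner_Integration.integrable_add intI integrable_ind'[where B=K] intro: order_trans[OF _ K1] abs_triangle_ineq4)[2])+
         (auto simp: integrable_indicator_iff intI)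
    have I1: "z + (z - d) * (R d - 1) \<le> I"
    proof -
      have "(\<integral>x. indicator {0..<z} x + indicator {0..<z-d} x * (R d - 1) \<partial>lborel) = z + (z - d) * (R d - 1)"
        using d by (subst Bochner_Integration.integral_add) (auto simp: integrable_indicator_iff)
      then show ?thesis using IgeJ[of d] d unfolding I_def by simp
    qed
    have cB: "d/z \<le> c"
    proof -
      have "s/z \<le> 1/\<beta>" using bz z bp s by (simp add: field_simps)
      then have "d/z \<le> 1/\<beta> - 1" using d z by (simp add: field_simps)
      moreover have "d/z \<le> 1" using d z by simp
      ultimately show ?thesis unfolding c_def by auto
    qed
    have X: "0 \<le> R d - 1" "R d - 1 \<le> R z - 1" using R1[of d] Rle[of d z] d by auto
    have dz: "0 \<le> d/z" using d z by simp
    have e1: "d/z*(z + (z - d) * (R d - 1)) \<le> d/z*I" using I1 dz by (intro mult_left_mono) auto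
    have e2: "d/z*(s*(R d - 1)) \<le> c*(s*(R z-1))"
      using cB X s dz c0 by (intro mult_mono) auto
    have e3: "s/z*I = I + d/z*I" using d z by (simp add: field_simps)
    have e4: "d/z*(z + (z - d) * (R d - 1)) + d/z*(s*(R d - 1)) = d + (R d - 1) * (2*d)"
      using d z by (simp add: field_simps)
    have "(\<integral>a. G a \<partial>lborel) \<le> s/z * I + c * (s * (R z - 1))"
      using e1 e2 e3 e4 intG_val by linarith
    from L fin[OF this] show ?thesis unfolding SE c_def by (rule order_trans)
  next
    case C
    define G where "G = (\<lambda>a. indicator {0..<s} a * R z)"
    have intG: "integrable lborel G" unfolding G_def using s
      by (auto simp: integrable_indicator_iff)
    have L: "(\<integral>\<^sup>+ a\<in>{0..<s}. ennreal (R (worst_rank rank_SRPT_B s z a)) \<partial>lborel)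
        \<le> ennreal (\<integral>a. G a \<partial>lborel)"
    proof (rule LHS_form[OF intG])
      fix a assume a: "0 \<le> a" "a < s"
      have "worst_rank rank_SRPT_B s z a \<le> z"
        by (rule wr_B_le) (use a in auto)
      then show "R (worst_rank rank_SRPT_B s z a) \<le> G a" using a by (simp add: G_def Rle)
    qed (simp add: G_def Rnn)
    have Gv: "(\<integral>a. G a \<partial>lborel) = s * R z" unfolding G_def using s by simp
    have I1: "z \<le> I"
      using IgeJ[of z] z unfolding I_def by (simp add: integrable_indicator_iff)
    have c1: "c = 1"
    proof -
      have "s/z \<le> 1/\<beta>" using bz z bp s by (simp add: field_simps)
      moreover have "2 < s/z" using C z by (simp add: field_simps)
      ultimately show ?thesis unfolding c_def by auto
    qed
    have "s \<le> s/z*I" using I1 s z by (simp add: field_simps)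
    then have "(\<integral>a. G a \<partial>lborel) \<le> s/z * I + c * (s * (R z - 1))"
      using Gv c1 by (simp add: algebra_simps)
    from L fin[OF this] show ?thesis unfolding SE c_def by (rule order_trans)
  qed
qed



lemma nn_integral_add_le:
  fixes A B :: "'a \<Rightarrow> ennreal"
  assumes B[measurable]: "B \<in> borel_measurable M"
  shows "(\<integral>\<^sup>+x. A x + B x \<partial>M) \<le> (\<integral>\<^sup>+x. A x \<partial>M) + (\<integral>\<^sup>+x. B x \<partial>M)"
proof -
  have "integral\<^sup>S M g \<le> (\<integral>\<^sup>+x. A x \<partial>M) + (\<integral>\<^sup>+x. B x \<partial>M)"
    if g: "simple_function M g" "g \<le> (\<lambda>x. A x + B x)" for g
  proof -
    have gm[measurable]: "g \<in> borel_measurable M" using g borel_measurable_simple_function by auto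
    define h where "h = (\<lambda>x. if B x = top then 0 else g x - B x)"
    have hm[measurable]: "h \<in> borel_measurable M" unfolding h_def by measurable
    have "integral\<^sup>S M g = (\<integral>\<^sup>+x. g x \<partial>M)" using nn_integral_eq_simple_integral[OF g(1)] by simp
    also have "\<dots> \<le> (\<integral>\<^sup>+x. h x + B x \<partial>M)"
      by (rule nn_integral_mono) (auto simp: h_def diff_add_self_ennreal)
    also have "\<dots> = (\<integral>\<^sup>+x. h x \<partial>M) + (\<integral>\<^sup>+x. B x \<partial>M)"
      by (rule nn_integral_add) auto
    also have "\<dots> \<le> (\<integral>\<^sup>+x. A x \<partial>M) + (\<integral>\<^sup>+x. B x \<partial>M)"
    proof (intro add_right_mono nn_integral_mono)
      fix x
      have "g x \<le> A x + B x" using g(2) by (auto simp: le_fun_def)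
      then show "h x \<le> A x" by (auto simp: h_def ennreal_minus_le_iff add.commute)
    qed
    finally show ?thesis .
  qed
  then show ?thesis unfolding nn_integral_def[of M "\<lambda>x. A x + B x"] by (intro SUP_least) auto
qed



lemma FTC_nn:
  fixes f G :: "real \<Rightarrow> real"
  assumes ab: "a \<le> b"
    and G: "\<And>x. a \<le> x \<Longrightarrow> x \<le> b \<Longrightarrow> (G has_real_derivative f x) (at x)"
    and f: "continuous_on {a..b} f" and f0: "\<And>x. a \<le> x \<Longrightarrow> x \<le> b \<Longrightarrow> 0 \<le> f x"
  shows "(\<integral>\<^sup>+ t. ennreal (indicator {a..<b} t * f t) \<partial>lborel) = ennreal (G b - G a)"
proof -
  have "(\<integral>\<^sup>+ t. ennreal (indicator {a..<b} t * f t) \<partial>lborel)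
      = (\<integral>\<^sup>+ t. ennreal (indicator {a..b} t * f t) \<partial>lborel)"
    by (rule nn_integral_cong_AE) (use AE_lborel_singleton[of b] in \<open>auto elim!: eventually_mono simp: indicator_def\<close>)
  also have "\<dots> = ennreal (\<integral>t. indicator {a..b} t * f t \<partial>lborel)"
    using borel_integrable_atLeastAtMost'[OF f, unfolded set_integrable_def]
    by (intro nn_integral_eq_integral) (auto simp: indicator_def f0)
  also have "(\<integral>t. indicator {a..b} t * f t \<partial>lborel) = G b - G a"
    using integral_FTC_atLeastAtMost[OF ab _ f, of G]
    using G by (auto simp: has_real_derivative_iff_has_vector_derivative[symmetric] intro: has_field_derivative_at_within)
  finally show ?thesis .
qed

lemma u_frac:
  fixes u :: real assumes u: "0 \<le> u" "u < 1"
  shows "ennreal (u / (1 - u)) = (\<integral>\<^sup>+ t. ennreal (indicator {0..<u} t * (1 / (1 - t)^2)) \<partial>lborel)"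
proof -
  have "(\<integral>\<^sup>+ t. ennreal (indicator {0..<u} t * (1 / (1 - t)^2)) \<partial>lborel) = ennreal (u/(1-u) - 0/(1-0))"
  proof (rule FTC_nn)
    fix x assume x: "0 \<le> x" "x \<le> u"
    then have "x \<noteq> 1" using u by auto
    then show "((\<lambda>t. t / (1 - t)) has_real_derivative 1 / (1 - x)^2) (at x)"
      by (auto intro!: derivative_eq_intros simp: field_simps power2_eq_square)
  next
    show "continuous_on {0..u} (\<lambda>t. 1 / (1 - t)^2)"
      using u by (intro continuous_intros) auto
  qed (use u in auto)
  then show ?thesis by simp
qed

lemma Gderiv: "x < (1::real) \<Longrightarrow> 0 < lam \<Longrightarrow> ((\<lambda>t. (- ln (1 - t) - (1 - r) / (1 - t)) / lam) has_real_derivative (r - x) / lam * (1 / (1 - x)^2)) (at x)"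
proof -
  assume x: "x < 1" "0 < lam"
  have d1: "((\<lambda>t. - ln (1 - t)) has_real_derivative 1/(1-x)) (at x)"
    using x by (auto intro!: derivative_eq_intros)
  have d2: "((\<lambda>t. (1 - r)/(1 - t)) has_real_derivative (1-r)/(1-x)^2) (at x)"
    using x by (auto intro!: derivative_eq_intros simp: power2_eq_square)
  have d3: "((\<lambda>t. (- ln (1 - t) - (1 - r) / (1 - t)) / lam) has_real_derivative (1/(1-x) - (1-r)/(1-x)^2) / lam) (at x)"
    by (intro DERIV_cdivide DERIV_diff d1 d2)
  have e: "(1/y - (1-r)/y^2) / lam = (r - (1-y)) / lam * (1 / y^2)" if "y \<noteq> 0" for y
    using that x by (simp add: field_simps power2_eq_square)
  have "(1/(1-x) - (1-r)/(1-x)^2) / lam = (r - x) / lam * (1 / (1 - x)^2)"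
    using e[of "1-x"] x by simp
  with d3 show ?thesis by simp
qed

lemma outer_val:
  fixes r lam :: real assumes r: "0 \<le> r" "r < 1" and lam: "0 < lam"
  shows "(\<integral>\<^sup>+ t. ennreal (indicator {0..<r} t * ((r - t) / lam * (1 / (1 - t)^2))) \<partial>lborel)
     = ennreal ((ln (1 / (1 - r)) - r) / lam)"
proof -
  let ?G = "\<lambda>t. (- ln (1 - t) - (1 - r) / (1 - t)) / lam"
  have "(\<integral>\<^sup>+ t. ennreal (indicator {0..<r} t * ((r - t) / lam * (1 / (1 - t)^2))) \<partial>lborel) = ennreal (?G r - ?G 0)"
  proof (rule FTC_nn)
    fix x assume x: "0 \<le> x" "x \<le> r"
    then have "x < 1" using r by auto
    then show "(?G has_real_derivative (r - x) / lam * (1 / (1 - x)^2)) (at x)"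
      using lam by (rule Gderiv)
  next
    show "continuous_on {0..r} (\<lambda>t. (r - t) / lam * (1 / (1 - t)^2))"
      using r lam by (intro continuous_intros) auto
  qed (use r lam in auto)
  also have "?G r - ?G 0 = (ln (1 / (1 - r)) - r) / lam"
    using r lam by (simp add: ln_div field_simps)
  finally show ?thesis .
qed



locale qsetting =
  fixes M :: "(real \<times> real) measure" and lam ES :: real
  assumes sM[measurable_cong]: "sets M = sets (borel :: (real \<times> real) measure)"
  and finM: "finite_measure M"
  and fstI: "integrable M fst"
  and fstE: "integral\<^sup>L M fst = ES"
  and pos: "AE p in M. 0 < fst p \<and> 0 < snd p"
  and null: "\<And>x. AE p in M. snd p \<noteq> x"
  and lam: "0 < lam" and rho1: "lam*ES < 1"
begin

abbreviation "F \<equiv> rhoZ lam M"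

lemma setle[measurable]: "{p. snd p \<le> (x::real)} \<in> sets M"
  unfolding sM by (intro borel_closed closed_Collect_le continuous_intros)

lemma bf: "(fst :: real \<times> real \<Rightarrow> real) \<in> borel_measurable borel" "(snd :: real \<times> real \<Rightarrow> real) \<in> borel_measurable borel"
  by (intro borel_measurable_continuous_onI continuous_intros)+

lemma fstM[measurable]: "fst \<in> borel_measurable M"
  using bf(1) measurable_cong_sets[OF sM refl, of borel] by simp

lemma sndM[measurable]: "snd \<in> borel_measurable M"
  using bf(2) measurable_cong_sets[OF sM refl, of borel] by simp

lemma spM: "space M = UNIV"
  using sets_eq_imp_space_eq[OF sM] by simp

lemma intind: "integrable M (\<lambda>p. fst p * indicator {p. snd p \<le> x} p)"
  by (rule integrable_real_mult_indicator[OF setle fstI])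

lemma F_nonneg: "0 \<le> F x"
  unfolding rhoZ_def using lam
  by (intro mult_nonneg_nonneg integral_nonneg_AE) (use pos in \<open>auto elim!: eventually_mono simp: indicator_def\<close>)

lemma F_mono: "x \<le> y \<Longrightarrow> F x \<le> F y"
  unfolding rhoZ_def using lam
  by (intro mult_left_mono integral_mono_AE intind) (use pos in \<open>auto elim!: eventually_mono simp: indicator_def\<close>)

lemma F_le: "F x \<le> lam * ES"
  unfolding rhoZ_def fstE[symmetric] using lam
  by (intro mult_left_mono integral_mono_AE intind fstI) (use pos in \<open>auto elim!: eventually_mono simp: indicator_def\<close>)

lemma F_zero: assumes "x \<le> 0" shows "F x = 0"
proof -
  have "AE p in M. fst p * indicator {p. snd p \<le> x} p = 0"
    using pos by eventually_elim (use assms in \<open>auto simp: indicator_def\<close>)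
  then show ?thesis unfolding rhoZ_def by (simp add: integral_eq_zero_AE)
qed

lemma Fm[measurable]: "F \<in> borel_measurable borel"
  by (rule borel_measurable_mono) (auto simp: mono_def F_mono)

lemma setlt[measurable]: "{p. t < F (snd p)} \<in> sets M"
proof -
  have "{p. t < F (snd p)} = {p \<in> space M. t < F (snd p)}" by (simp add: spM)
  also have "\<dots> \<in> sets M" by measurable
  finally show ?thesis .
qed

lemma F_lim:
  assumes X: "\<And>p::real\<times>real. snd p \<noteq> x0 \<Longrightarrow> (\<lambda>n. indicator {p. snd p \<le> X n} p :: real) \<longlonglongrightarrow> indicator {p. snd p \<le> x0} p"
  shows "(\<lambda>n. F (X n)) \<longlonglongrightarrow> F x0"
  unfolding rhoZ_def
proof (intro tendsto_mult tendsto_const integral_dominated_convergence[where w=fst])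
  show "AE p in M. (\<lambda>n. fst p * indicator {p. snd p \<le> X n} p) \<longlonglongrightarrow> fst p * indicator {p. snd p \<le> x0} p"
    using null[of x0]
  proof eventually_elim
    case (elim p)
    from X[OF elim] show ?case by (rule tendsto_mult_left)
  qed
  show "AE p in M. norm (fst p * indicator {p. snd p \<le> X n} p) \<le> fst p" for n
    using pos by eventually_elim (auto simp: indicator_def)
qed (auto simp: fstI intro!: borel_measurable_integrable[OF intind])

lemma F_cont: "continuous_on UNIV F"
proof -
  have "isCont F x0" for x0
  proof (rule continuous_at_sequentiallyI)
    fix X :: "nat \<Rightarrow> real" assume X: "X \<longlonglongrightarrow> x0"
    show "(\<lambda>n. F (X n)) \<longlonglongrightarrow> F x0"
    proof (rule F_lim)
      fix p :: "real \<times> real" assume p: "snd p \<noteq> x0"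
      show "(\<lambda>n. indicator {p. snd p \<le> X n} p :: real) \<longlonglongrightarrow> indicator {p. snd p \<le> x0} p"
      proof (cases "snd p < x0")
        case True
        then have "eventually (\<lambda>n. snd p < X n) sequentially" by (rule order_tendstoD[OF X])
        then show ?thesis using True by (intro tendsto_eventually) (auto elim!: eventually_mono simp: indicator_def)
      next
        case False
        then have "x0 < snd p" using p by auto
        then have "eventually (\<lambda>n. X n < snd p) sequentially" by (rule order_tendstoD[OF X])
        then show ?thesis using False p by (intro tendsto_eventually) (auto elim!: eventually_mono simp: indicator_def)
      qed
    qed
  qed
  then show ?thesis by (simp add: continuous_on_eq_continuous_at)
qed

lemma F_top: assumes "t < lam * ES" shows "\<exists>x. 0 \<le> x \<and> t \<le> F x"
proof -
  have "(\<lambda>n. F (real n)) \<longlonglongrightarrow> lam * (\<integral>p. fst p \<partial>M)"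
    unfolding rhoZ_def
  proof (intro tendsto_mult tendsto_const integral_dominated_convergence[where w=fst])
    show "AE p in M. (\<lambda>n. fst p * indicator {p. snd p \<le> real n} p) \<longlonglongrightarrow> fst p"
    proof (rule AE_I2)
      fix p :: "real \<times> real"
      obtain N where N: "snd p \<le> real N" using real_arch_simple by blast
      have "eventually (\<lambda>n. fst p * indicator {p. snd p \<le> real n} p = fst p) sequentially"
        unfolding eventually_sequentially
        by (rule exI[of _ N]) (use N in \<open>auto simp: indicator_def\<close>)
      then show "(\<lambda>n. fst p * indicator {p. snd p \<le> real n} p) \<longlonglongrightarrow> fst p"
        by (rule tendsto_eventually)
    qed
    show "AE p in M. norm (fst p * indicator {p. snd p \<le> real n} p) \<le> fst p" for n
      using pos by eventually_elim (auto simp: indicator_def)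
  qed (auto simp: fstI intro!: borel_measurable_integrable[OF intind] borel_measurable_integrable[OF fstI])
  then have "eventually (\<lambda>n. t < F (real n)) sequentially"
    using assms fstE by (intro order_tendstoD(1)) auto
  then obtain n where "t < F (real n)" by (auto simp: eventually_sequentially)
  then show ?thesis by (intro exI[of _ "real n"]) auto
qed

lemma key:
  assumes t: "0 \<le> t" "t < lam * ES"
  shows "(\<integral>\<^sup>+ p. ennreal (fst p * indicator {p. t < F (snd p)} p) \<partial>M) \<le> ennreal ((lam * ES - t) / lam)"
proof -
  obtain X where X: "0 \<le> X" "t \<le> F X" using F_top[OF t(2)] by blast
  have "\<exists>x. 0 \<le> x \<and> x \<le> X \<and> F x = t"
    by (rule IVT') (use X t F_zero[of 0] continuous_on_subset[OF F_cont] in auto)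
  then obtain x where x: "F x = t" by blast
  have "(\<integral>\<^sup>+ p. ennreal (fst p * indicator {p. t < F (snd p)} p) \<partial>M)
      \<le> (\<integral>\<^sup>+ p. ennreal (fst p - fst p * indicator {p. snd p \<le> x} p) \<partial>M)"
  proof (rule nn_integral_mono_AE)
    show "AE p in M. ennreal (fst p * indicator {p. t < F (snd p)} p)
        \<le> ennreal (fst p - fst p * indicator {p. snd p \<le> x} p)"
      using pos
    proof eventually_elim
      case (elim p)
      show ?case
      proof (cases "t < F (snd p)")
        case True
        then have "\<not> snd p \<le> x" using F_mono[of "snd p" x] x by auto
        then show ?thesis using True by (simp add: indicator_def)
      next
        case False
        then show ?thesis using elim by (simp add: indicator_def)
      qed
    qed
  qed
  also have "\<dots> = ennreal (\<integral>p. fst p - fst p * indicator {p. snd p \<le> x} p \<partial>M)"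
    by (rule nn_integral_eq_integral[OF Bochner_Integration.integrable_diff[OF fstI intind]])
      (use pos in \<open>auto elim!: eventually_mono simp: indicator_def\<close>)
  also have "(\<integral>p. fst p - fst p * indicator {p. snd p \<le> x} p \<partial>M) = ES - F x / lam"
    using lam by (simp add: fstI intind fstE rhoZ_def)
  also have "ES - F x / lam = (lam * ES - t) / lam" using lam x by (simp add: field_simps)
  finally show ?thesis .
qed

lemma global:
  "(\<integral>\<^sup>+ p. ennreal (fst p * (1 / (1 - F (snd p)) - 1)) \<partial>M)
     \<le> ennreal ((ln (1 / (1 - lam*ES)) - lam*ES) / lam)"
proof -
  define r where "r = lam*ES"
  have r: "0 \<le> r" "r < 1" using F_nonneg[of 0] F_le[of 0] rho1 by (auto simp: r_def)
  define g where "g t = indicator {0..<r} t * (1/(1-t)^2)" for t :: real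
  have g0: "0 \<le> g t" for t by (simp add: g_def)
  have gm[measurable]: "g \<in> borel_measurable borel" unfolding g_def by measurable
  define h where "h p t = ennreal (if t < F (snd p) then fst p * g t else 0)" for p :: "real \<times> real" and t
  interpret finite_measure M by (rule finM)
  interpret P: pair_sigma_finite M lborel
    by (intro pair_sigma_finite.intro sigma_finite_lborel) unfold_locales
  have m0: "fst \<in> M \<Otimes>\<^sub>M lborel \<rightarrow>\<^sub>M (borel :: (real \<times> real) measure)"
    using measurable_fst[of M lborel] measurable_cong_sets[OF refl sM, of "M \<Otimes>\<^sub>M lborel"] by simp
  have m3[measurable]: "snd \<in> borel_measurable (M \<Otimes>\<^sub>M lborel)"
    using measurable_snd[of M lborel] measurable_cong_sets[OF refl sets_lborel, of "M \<Otimes>\<^sub>M lborel"] by simp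
  have m1[measurable]: "(\<lambda>x. fst (fst x)) \<in> borel_measurable (M \<Otimes>\<^sub>M lborel)"
    using measurable_compose[OF m0 bf(1)] by (simp add: comp_def)
  have m2[measurable]: "(\<lambda>x. snd (fst x)) \<in> borel_measurable (M \<Otimes>\<^sub>M lborel)"
    using measurable_compose[OF m0 bf(2)] by (simp add: comp_def)
  have hm: "case_prod h \<in> borel_measurable (M \<Otimes>\<^sub>M lborel)"
  proof -
    have "case_prod h = (\<lambda>x. ennreal (if snd x < F (snd (fst x)) then fst (fst x) * g (snd x) else 0))"
      by (auto simp: h_def fun_eq_iff)
    also have "\<dots> \<in> borel_measurable (M \<Otimes>\<^sub>M lborel)" by measurable
    finally show ?thesis .
  qed
  have step2: "AE p in M. ennreal (fst p * (1 / (1 - F (snd p)) - 1)) = (\<integral>\<^sup>+ t. h p t \<partial>lborel)"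
    using pos
  proof eventually_elim
    case (elim p)
    define u where "u = F (snd p)"
    have u: "0 \<le> u" "u \<le> r" using F_nonneg F_le by (auto simp: u_def r_def)
    have "ennreal (fst p * (1 / (1 - F (snd p)) - 1)) = ennreal (fst p) * ennreal (u / (1 - u))"
      using u r elim by (subst ennreal_mult[symmetric]) (auto simp: u_def field_simps)
    also have "\<dots> = ennreal (fst p) * (\<integral>\<^sup>+ t. ennreal (indicator {0..<u} t * (1 / (1 - t)^2)) \<partial>lborel)"
      using u r by (subst u_frac) auto
    also have "\<dots> = (\<integral>\<^sup>+ t. ennreal (fst p) * ennreal (indicator {0..<u} t * (1 / (1 - t)^2)) \<partial>lborel)"
      by (rule nn_integral_cmult[symmetric]) measurable
    also have "\<dots> = (\<integral>\<^sup>+ t. h p t \<partial>lborel)"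
    proof (rule nn_integral_cong)
      fix t
      have "indicator {0..<u} t = (indicator {p. t < F (snd p)} p * indicator {0..<r} t :: real)"
        using u by (auto simp: indicator_def u_def)
      then show "ennreal (fst p) * ennreal (indicator {0..<u} t * (1 / (1 - t)^2)) = h p t"
        using elim by (auto simp: h_def g_def ennreal_mult[symmetric] mult_ac indicator_def)
    qed
    finally show ?case .
  qed
  have "(\<integral>\<^sup>+ p. ennreal (fst p * (1 / (1 - F (snd p)) - 1)) \<partial>M)
      = (\<integral>\<^sup>+ p. (\<integral>\<^sup>+ t. h p t \<partial>lborel) \<partial>M)"
    by (rule nn_integral_cong_AE[OF step2])
  also have "\<dots> = (\<integral>\<^sup>+ t. (\<integral>\<^sup>+ p. h p t \<partial>M) \<partial>lborel)"
    by (rule P.Fubini'[OF hm, symmetric])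
  also have "\<dots> \<le> (\<integral>\<^sup>+ t. ennreal (indicator {0..<r} t * ((r - t) / lam * (1 / (1 - t)^2))) \<partial>lborel)"
  proof (rule nn_integral_mono)
    fix t
    have "(\<integral>\<^sup>+ p. h p t \<partial>M) = (\<integral>\<^sup>+ p. ennreal (fst p * indicator {p. t < F (snd p)} p) * ennreal (g t) \<partial>M)"
      unfolding h_def using g0 by (intro nn_integral_cong) (simp add: ennreal_mult''[symmetric] indicator_def)
    also have "\<dots> = (\<integral>\<^sup>+ p. ennreal (fst p * indicator {p. t < F (snd p)} p) \<partial>M) * ennreal (g t)"
      by (rule nn_integral_multc) measurable
    also have "\<dots> \<le> ennreal (indicator {0..<r} t * ((r - t) / lam * (1 / (1 - t)^2)))"
    proof (cases "0 \<le> t \<and> t < r")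
      case True
      have "(\<integral>\<^sup>+ p. ennreal (fst p * indicator {p. t < F (snd p)} p) \<partial>M) * ennreal (g t)
          \<le> ennreal ((r - t) / lam) * ennreal (g t)"
        using key[of t] True by (intro mult_right_mono) (auto simp: r_def)
      also have "\<dots> = ennreal (indicator {0..<r} t * ((r - t) / lam * (1 / (1 - t)^2)))"
        using True lam by (simp add: g_def ennreal_mult[symmetric])
      finally show ?thesis .
    next
      case False
      then show ?thesis by (auto simp: g_def)
    qed
    finally show "(\<integral>\<^sup>+ p. h p t \<partial>M) \<le> ennreal (indicator {0..<r} t * ((r - t) / lam * (1 / (1 - t)^2)))" .
  qed
  also have "\<dots> = ennreal ((ln (1 / (1 - r)) - r) / lam)"
    by (rule outer_val[OF r lam])
  finally show ?thesis by (simp add: r_def)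
qed

end



theorem mainTheorem7:
  fixes lam \<alpha> \<beta> ES :: real and f :: "real \<times> real \<Rightarrow> real" and M :: "(real \<times> real) measure"
  assumes dens: "M = density lborel (\<lambda>p. ennreal (f p))"
    and f_meas: "f \<in> borel_measurable borel"
    and f_nonneg: "\<And>p. 0 \<le> f p"
    and f_prob: "(\<integral>\<^sup>+ p. ennreal (f p) \<partial>lborel) = 1"
    and lam_pos: "0 < lam"
    and ES: "(\<integral>\<^sup>+ p. ennreal (fst p) \<partial>M) = ennreal ES"
    and rho_pos: "0 < lam * ES" and rho_lt1: "lam * ES < 1"
    and \<beta>_pos: "0 < \<beta>" and \<beta>\<alpha>: "\<beta> \<le> \<alpha>"
    and bounded: "AE p in M. 0 < fst p \<and> \<beta> * fst p \<le> snd p \<and> snd p \<le> \<alpha> * fst p"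
  shows "mean_res_time rank_SRPT_B lam M
           \<le> mean_res_time rank_SRPT_SE lam M
             + ennreal (min 1 (max (1 - 1 / \<alpha>) (1 / \<beta> - 1))
                 * (1 / (lam * ES) * ln (1 / (1 - lam * ES)) - 1) * ES)"
proof -
  have sM: "sets M = sets (borel :: (real \<times> real) measure)" by (simp add: dens)
  have spM: "space M = UNIV" using sets_eq_imp_space_eq[OF sM] by simp
  have finM: "finite_measure M"
  proof (rule finite_measureI)
    have "emeasure M (space M) = (\<integral>\<^sup>+ p. ennreal (f p) \<partial>lborel)"
      unfolding dens using f_meas by (simp add: emeasure_density)
    then show "emeasure M (space M) \<noteq> \<infinity>" using f_prob by simp
  qed
  have ES0: "0 < ES" using rho_pos lam_pos by (simp add: zero_less_mult_iff)
  have bf: "(fst :: real \<times> real \<Rightarrow> real) \<in> borel_measurable borel" "(snd :: real \<times> real \<Rightarrow> real) \<in> borel_measurable borel"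
    by (intro borel_measurable_continuous_onI continuous_intros)+
  have fstM[measurable]: "fst \<in> borel_measurable M"
    using bf(1) measurable_cong_sets[OF sM refl, of borel] by metis
  have pos: "AE p in M. 0 < fst p \<and> 0 < snd p"
    using bounded by eventually_elim (use \<beta>_pos in \<open>auto intro: less_le_trans[OF mult_pos_pos]\<close>)
  have fstI: "integrable M fst"
    by (rule integrableI_nonneg) (use pos ES in \<open>auto elim!: eventually_mono\<close>)
  have fstE: "integral\<^sup>L M fst = ES"
  proof -
    have fnn: "AE x in M. 0 \<le> fst x" using pos by eventually_elim auto
    have "ennreal (integral\<^sup>L M fst) = ennreal ES"
      using nn_integral_eq_integral[OF fstI fnn] ES by simp
    moreover have "0 \<le> integral\<^sup>L M fst" using pos by (intro integral_nonneg_AE) (auto elim!: eventually_mono)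
    ultimately show ?thesis using ES0 by simp
  qed
  have null: "AE p in M. snd p \<noteq> x" for x
  proof -
    have "AE p in (lborel \<Otimes>\<^sub>M lborel :: (real \<times> real) measure). snd p \<noteq> x"
    proof (subst lborel_pair.AE_pair_iff[symmetric])
      show "{p \<in> space (lborel \<Otimes>\<^sub>M lborel). snd p \<noteq> x} \<in> sets (lborel \<Otimes>\<^sub>M (lborel::real measure))"
        by measurable
      show "AE a in lborel. AE b in lborel. b \<noteq> (x::real)"
        using AE_lborel_singleton[of x] by simp
    qed
    note pr = this
    have "AE p in (lborel :: (real \<times> real) measure). snd p \<noteq> x"
      by (insert pr, subst (asm) lborel_prod, assumption)
    then show ?thesis unfolding dens using f_meas
      by (subst AE_density) (auto elim!: eventually_mono)
  qed
  interpret Q: qsetting M lam ES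
    by (rule qsetting.intro[OF sM finM fstI fstE pos null lam_pos rho_lt1])
  define R where "R x = 1 / (1 - rhoZ lam M x)" for x
  define \<rho> where "\<rho> = lam * ES"
  have Fb: "0 \<le> rhoZ lam M x" "rhoZ lam M x \<le> \<rho>" for x using Q.F_nonneg Q.F_le by (auto simp: \<rho>_def)
  have \<rho>1: "\<rho> < 1" using rho_lt1 by (simp add: \<rho>_def)
  have monoR: "mono R"
  proof (rule monoI)
    fix x y :: real assume "x \<le> y"
    then have "rhoZ lam M x \<le> rhoZ lam M y" by (rule Q.F_mono)
    then show "R x \<le> R y" unfolding R_def using Fb[of x] Fb[of y] \<rho>1
      by (intro divide_left_mono mult_pos_pos) auto
  qed
  have R1: "1 \<le> R x" for x unfolding R_def using Fb[of x] \<rho>1 by (simp add: field_simps)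
  have RK: "R x \<le> 1 / (1 - \<rho>)" for x unfolding R_def using Fb[of x] \<rho>1
    by (intro divide_left_mono mult_pos_pos) auto
  have R0: "R x = 1" if "x \<le> 0" for x unfolding R_def using Q.F_zero[OF that] by simp
  have Rm[measurable]: "R \<in> borel_measurable borel" using borel_measurable_mono monoR by blast
  have cond: "cond_res_time r lam M s z = (\<integral>\<^sup>+ a\<in>{0..<s}. ennreal (R (worst_rank r s z a)) \<partial>lborel)" for r s z
    unfolding cond_res_time_def R_def ..
  define c where "c = min 1 (max (1 - 1/\<alpha>) (1/\<beta> - 1))"
  have c0: "0 \<le> c"
  proof (cases "\<beta> \<le> 1")
    case True then have "0 \<le> 1/\<beta> - 1" using \<beta>_pos by (simp add: field_simps)
    then show ?thesis unfolding c_def by auto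
  next
    case False then have "1 < \<alpha>" using \<beta>\<alpha> by auto
    then have "0 \<le> 1 - 1/\<alpha>" by (simp add: field_simps)
    then show ?thesis unfolding c_def by auto
  qed
  define Bp where "Bp p = ennreal (c * (fst p * (R (snd p) - 1)))" for p :: "real \<times> real"
  have sndM[measurable]: "snd \<in> borel_measurable M"
    using bf(2) measurable_cong_sets[OF sM refl, of borel] by metis
  have Bpm: "Bp \<in> borel_measurable M" unfolding Bp_def by measurable
  have perjobAE: "AE p in M. cond_res_time rank_SRPT_B lam M (fst p) (snd p)
      \<le> cond_res_time rank_SRPT_SE lam M (fst p) (snd p) + Bp p"
    using bounded
  proof eventually_elim
    case (elim p)
    have "0 < snd p" using elim \<beta>_pos by (auto intro: less_le_trans[OF mult_pos_pos])
    then show ?case unfolding cond Bp_def c_def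
      using perjob[OF monoR R1 RK R0, of "fst p" "snd p" \<beta> \<alpha>] elim \<beta>_pos \<beta>\<alpha>
      by (auto simp: mult_ac)
  qed
  have "mean_res_time rank_SRPT_B lam M
      \<le> (\<integral>\<^sup>+ p. cond_res_time rank_SRPT_SE lam M (fst p) (snd p) + Bp p \<partial>M)"
    unfolding mean_res_time_def by (rule nn_integral_mono_AE[OF perjobAE])
  also have "\<dots> \<le> mean_res_time rank_SRPT_SE lam M + (\<integral>\<^sup>+ p. Bp p \<partial>M)"
    unfolding mean_res_time_def by (rule nn_integral_add_le[OF Bpm])
  also have "(\<integral>\<^sup>+ p. Bp p \<partial>M) = ennreal c * (\<integral>\<^sup>+ p. ennreal (fst p * (1 / (1 - rhoZ lam M (snd p)) - 1)) \<partial>M)"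
    unfolding Bp_def R_def using c0
    by (subst nn_integral_cmult[symmetric]) (measurable, simp add: ennreal_mult')
  also have "\<dots> \<le> ennreal c * ennreal ((ln (1 / (1 - lam*ES)) - lam*ES) / lam)"
    by (intro mult_left_mono Q.global) simp
  also have "ennreal c * ennreal ((ln (1 / (1 - lam*ES)) - lam*ES) / lam)
      = ennreal (min 1 (max (1 - 1 / \<alpha>) (1 / \<beta> - 1)) * (1 / (lam * ES) * ln (1 / (1 - lam * ES)) - 1) * ES)"
  proof -
    have "(ln (1 / (1 - lam*ES)) - lam*ES) / lam = (1 / (lam * ES) * ln (1 / (1 - lam * ES)) - 1) * ES"
      using lam_pos ES0 by (simp add: field_simps)
    then show ?thesis using c0 by (simp add: ennreal_mult'[symmetric] c_def mult.assoc)
  qed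
  finally show ?thesis by simp
qed

end
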